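(* Let $\mathcal{C}$ be a prevariety over a finite alphabet $A$ and let $\alpha:A^*\to M$ be a surjective morphism into a finite monoid. For every idempotent $e\in M$, the $\mathcal{C}$-orbit of $e$ for $\alpha$ is a subsemigroup of $M$; moreover, it is a monoid whose neutral element is $e$.
   Context: Fix a finite alphabet $A$. A prevariety is a class of regular languages over $A$ containing $\emptyset$ and $A^*$, closed under union, intersection, complement, and under the quotients $u^{-1}L=\{w\mid uw\in L\}$ and $Lu^{-1}=\{w\mid wu\in L\}$. A language $L_1$ is $\mathcal{C}$-separable from $L_2$ if some $K\in\mathcal{C}$ satisfies $L_1\subseteq K$ and $K\cap L_2=\emptyset$. For a morphism $\alpha:A^*\to M$, $(s,t)\in M^2$ is a $\mathcal{C}$-pair if $\alpha^{-1}(s)$ is not $\mathcal{C}$-separable from $\alpha^{-1}(t)$. For an idempotent $e\in M$, the $\mathcal{C}$-orbit of $e$ for $\alpha$ is $\{ese\mid s\in M,\ (e,s)\text{ is a }\mathcal{C}\text{-pair}\}$. *)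

theory Defs
  imports Main
begin

definition regular :: "'a list set \<Rightarrow> bool" where
  "regular L \<longleftrightarrow> (\<exists>(Q::nat set) q0 (delta :: nat \<Rightarrow> 'a \<Rightarrow> nat) F.
      finite Q \<and> q0 \<in> Q \<and> (\<forall>q\<in>Q. \<forall>a. delta q a \<in> Q) \<and> F \<subseteq> Q \<and>
      L = {w. foldl delta q0 w \<in> F})"

definition left_quot :: "'a list \<Rightarrow> 'a list set \<Rightarrow> 'a list set" where
  "left_quot u L = {w. u @ w \<in> L}"

definition right_quot :: "'a list set \<Rightarrow> 'a list \<Rightarrow> 'a list set" where
  "right_quot L u = {w. w @ u \<in> L}"

definition prevariety :: "'a list set set \<Rightarrow> bool" where
  "prevariety C \<longleftrightarrow>
     (\<forall>L\<in>C. regular L) \<and> {} \<in> C \<and> UNIV \<in> C \<and>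
     (\<forall>K\<in>C. \<forall>L\<in>C. K \<union> L \<in> C) \<and>
     (\<forall>K\<in>C. \<forall>L\<in>C. K \<inter> L \<in> C) \<and>
     (\<forall>L\<in>C. - L \<in> C) \<and>
     (\<forall>L\<in>C. \<forall>u. left_quot u L \<in> C \<and> right_quot L u \<in> C)"

definition separable :: "'a list set set \<Rightarrow> 'a list set \<Rightarrow> 'a list set \<Rightarrow> bool" where
  "separable C L1 L2 \<longleftrightarrow> (\<exists>K\<in>C. L1 \<subseteq> K \<and> K \<inter> L2 = {})"

definition monoid_morphism :: "('a list \<Rightarrow> 'm::monoid_mult) \<Rightarrow> bool" where
  "monoid_morphism \<alpha> \<longleftrightarrow> \<alpha> [] = 1 \<and> (\<forall>u v. \<alpha> (u @ v) = \<alpha> u * \<alpha> v)"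

definition C_pair :: "'a list set set \<Rightarrow> ('a list \<Rightarrow> 'm) \<Rightarrow> 'm \<Rightarrow> 'm \<Rightarrow> bool" where
  "C_pair C \<alpha> s t \<longleftrightarrow> \<not> separable C (\<alpha> -` {s}) (\<alpha> -` {t})"

definition C_orbit :: "'a list set set \<Rightarrow> ('a list \<Rightarrow> 'm::monoid_mult) \<Rightarrow> 'm \<Rightarrow> 'm set" where
  "C_orbit C \<alpha> e = {e * s * e | s. C_pair C \<alpha> e s}"

end

theory Submission
  imports Defs
begin
lemma foldl_in:
  assumes "\<forall>q\<in>Q. \<forall>a. delta q a \<in> Q" "q \<in> Q"
  shows "foldl delta q w \<in> Q"
  using assms(2) by (induction w arbitrary: q) (auto simp: assms(1))

lemma fin_quot:
  assumes "regular K"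
  shows "finite {left_quot u K | u. P u}"
proof -
  from assms obtain Q :: "nat set" and q0 delta F where h: "finite Q" "q0 \<in> Q"
    "\<forall>q\<in>Q. \<forall>a. delta q a \<in> Q" "F \<subseteq> Q" "K = {w. foldl delta q0 w \<in> F}"
    unfolding regular_def by (elim exE conjE) (rule that)
  have "{left_quot u K | u. P u} \<subseteq> (\<lambda>q. {w. foldl delta q w \<in> F}) ` Q"
  proof
    fix X assume "X \<in> {left_quot u K | u. P u}"
    then obtain u where "X = left_quot u K" by blast
    then have "X = (\<lambda>q. {w. foldl delta q w \<in> F}) (foldl delta q0 u)"
      by (simp add: left_quot_def h(5))
    moreover have "foldl delta q0 u \<in> Q" using foldl_in h(2,3) by metis
    ultimately show "X \<in> (\<lambda>q. {w. foldl delta q w \<in> F}) ` Q" by (rule image_eqI)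
  qed
  then show ?thesis by (rule finite_subset) (rule finite_imageI[OF h(1)])
qed
lemma inter_closed:
  assumes "prevariety C" "finite S" "S \<subseteq> C"
  shows "\<Inter>S \<in> C"
  using assms(2,3)
proof (induction S rule: finite_induct)
  case empty then show ?case using assms(1) by (simp add: prevariety_def)
next
  case (insert x F) then show ?case using assms(1) by (simp add: prevariety_def)
qed

lemma compat:
  assumes pv: "prevariety C" and mm: "monoid_morphism \<alpha>"
    and p1: "C_pair C \<alpha> s t" and p2: "C_pair C \<alpha> s' t'"
  shows "C_pair C \<alpha> (s*s') (t*t')"
proof (rule ccontr)
  assume "\<not> C_pair C \<alpha> (s*s') (t*t')"
  then obtain K where K: "K \<in> C" "\<alpha> -` {s*s'} \<subseteq> K" "K \<inter> \<alpha> -` {t*t'} = {}"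
    unfolding C_pair_def separable_def by blast
  define H where "H = \<Inter>{left_quot u K | u. \<alpha> u = s}"
  have regK: "regular K" using K(1) pv unfolding prevariety_def by blast
  have lq: "\<And>u. left_quot u K \<in> C" using K(1) pv unfolding prevariety_def by blast
  have fin: "finite {left_quot u K | u. \<alpha> u = s}" by (rule fin_quot[OF regK])
  have sub: "{left_quot u K | u. \<alpha> u = s} \<subseteq> C" using lq by blast
  have HC: "H \<in> C" unfolding H_def by (rule inter_closed[OF pv fin sub])
  have Hs: "\<alpha> -` {s'} \<subseteq> H"
  proof
    fix w assume w: "w \<in> \<alpha> -` {s'}"
    show "w \<in> H" unfolding H_def
    proof
      fix X assume "X \<in> {left_quot u K | u. \<alpha> u = s}"
      then obtain u where u: "X = left_quot u K" "\<alpha> u = s" by blast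
      have "\<alpha> (u @ w) = s * s'" using mm u(2) w unfolding monoid_morphism_def by simp
      then have "u @ w \<in> K" using K(2) by blast
      then show "w \<in> X" using u(1) unfolding left_quot_def by simp
    qed
  qed
  have "H \<inter> \<alpha> -` {t'} \<noteq> {}"
    using p2 HC Hs unfolding C_pair_def separable_def by blast
  then obtain w' where w': "w' \<in> H" "\<alpha> w' = t'" by blast
  have RC: "right_quot K w' \<in> C" using K(1) pv unfolding prevariety_def by simp
  have Rs: "\<alpha> -` {s} \<subseteq> right_quot K w'"
  proof
    fix u assume u: "u \<in> \<alpha> -` {s}"
    then have "left_quot u K \<in> {left_quot u K | u. \<alpha> u = s}" by blast
    then have "w' \<in> left_quot u K" using w'(1) unfolding H_def by blast
    then show "u \<in> right_quot K w'" unfolding left_quot_def right_quot_def by simp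
  qed
  have "right_quot K w' \<inter> \<alpha> -` {t} \<noteq> {}"
    using p1 RC Rs unfolding C_pair_def separable_def by blast
  then obtain u' where u': "u' \<in> right_quot K w'" "\<alpha> u' = t" by blast
  then have u'K: "u' @ w' \<in> K" unfolding right_quot_def by simp
  have "\<alpha> (u' @ w') = t * t'" using mm u' w' unfolding monoid_morphism_def by simp
  then show False using K(3) u'K by blast
qed

lemma refl_pair:
  assumes "surj \<alpha>" shows "C_pair C \<alpha> e e"
proof -
  obtain w where "\<alpha> w = e" using assms by (metis surjD)
  then show ?thesis unfolding C_pair_def separable_def by blast
qed

theorem lemma5p5:
  fixes C :: "('a::finite) list set set"
    and \<alpha> :: "'a list \<Rightarrow> 'm::{monoid_mult, finite}"
    and e :: 'm
  assumes "prevariety C"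
    and "monoid_morphism \<alpha>"
    and "surj \<alpha>"
    and "e * e = e"
  shows "(\<forall>x\<in>C_orbit C \<alpha> e. \<forall>y\<in>C_orbit C \<alpha> e. x * y \<in> C_orbit C \<alpha> e)
       \<and> e \<in> C_orbit C \<alpha> e
       \<and> (\<forall>x\<in>C_orbit C \<alpha> e. e * x = x \<and> x * e = x)"
proof (intro conjI ballI)
  fix x y assume "x \<in> C_orbit C \<alpha> e" "y \<in> C_orbit C \<alpha> e"
  then obtain s t where st: "x = e * s * e" "C_pair C \<alpha> e s" "y = e * t * e" "C_pair C \<alpha> e t"
    unfolding C_orbit_def by blast
  have "C_pair C \<alpha> (e * e) (s * e)"
    using compat[OF assms(1,2) st(2) refl_pair[OF assms(3)]] .
  then have "C_pair C \<alpha> e (s * e)" using assms(4) by simp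
  from compat[OF assms(1,2) this st(4)] have "C_pair C \<alpha> e (s * e * t)"
    using assms(4) by simp
  moreover have "x * y = e * s * (e * e) * t * e"
    using st by (simp add: mult.assoc)
  then have "x * y = e * (s * e * t) * e"
    using assms(4) by (simp add: mult.assoc)
  ultimately show "x * y \<in> C_orbit C \<alpha> e" unfolding C_orbit_def by blast
next
  show "e \<in> C_orbit C \<alpha> e" unfolding C_orbit_def
  proof -
    have "e = e * e * e" using assms(4) by simp
    then show "e \<in> {e * s * e | s. C_pair C \<alpha> e s}" using refl_pair[OF assms(3)] by blast
  qed
next
  fix x assume "x \<in> C_orbit C \<alpha> e"
  then obtain s where "x = e * s * e" unfolding C_orbit_def by blast
  then show "e * x = x" "x * e = x" using assms(4) by (simp_all add: mult.assoc[symmetric]) (simp add: mult.assoc)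
qed

end
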